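(* Let $X,Y$ be Polish, $m$ a finite non-negative Borel measure on $X$, and $E:L^0(X,Y;m)\to[0,+\infty]$ Borel (no further assumption). If $\mathcal{T}:\mathcal{M}_{\pi_1\to m}(X\times Y)\to[0,+\infty]$ is convex, lower semi-continuous for narrow convergence, and satisfies $\mathcal{T}(\boldsymbol{\mu}_u)\le E(u)$ for all $u\in L^0(X,Y;m)$, then $\mathcal{T}\le\mathcal{T}_E$.
   Context: $L^0(X,Y;m)$: Borel maps modulo $m$-a.e. equality, convergence in $m$-measure. $\mathcal{M}_{\pi_1\to m}(X\times Y)$: finite non-negative Borel measures on $X\times Y$ with first marginal $m$, narrow topology. $\boldsymbol{\mu}_u=(\mathrm{Id},u)_\#m$. $\Pi(\boldsymbol{\mu})$: Borel probability measures $Q$ on $L^0(X,Y;m)$ with $\int\varphi\,d\boldsymbol{\mu}=\int\big(\int_X\varphi(x,u(x))\,m(dx)\big)Q(du)$ for all $\varphi\in C_b(X\times Y)$. $\mathcal{T}_E(\boldsymbol{\mu})=\inf\{\int E\,dQ:Q\in\Pi(\boldsymbol{\mu})\}$. *)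

theory Defs
  imports "HOL-Analysis.Analysis" "HOL-Probability.Probability"
begin

definition Cb :: "('a::topological_space \<Rightarrow> real) set" where
  "Cb = {\<phi>. continuous_on UNIV \<phi> \<and> bounded (range \<phi>)}"

text \<open>Representatives of L0(X,Y;m): Borel maps X to Y.  The quotient by m-a.e.
  equality is handled through the pseudometric below: all open sets of the
  pseudometric topology, hence all Borel sets, are saturated for a.e. equality.\<close>
definition L0 :: "'x::topological_space measure \<Rightarrow> ('x \<Rightarrow> 'y::metric_space) set" where
  "L0 m = {u. u \<in> borel_measurable m}"

text \<open>Pseudometric metrizing convergence in m-measure (m finite).\<close>
definition L0_dist :: "'x::topological_space measure \<Rightarrow> ('x \<Rightarrow> 'y::metric_space) \<Rightarrow> ('x \<Rightarrow> 'y) \<Rightarrow> real" where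
  "L0_dist m u v = (\<integral>x. min 1 (dist (u x) (v x)) \<partial>m)"

definition L0_open :: "'x::topological_space measure \<Rightarrow> ('x \<Rightarrow> 'y::metric_space) set \<Rightarrow> bool" where
  "L0_open m U \<longleftrightarrow> U \<subseteq> L0 m \<and>
     (\<forall>u\<in>U. \<exists>r>0. \<forall>v\<in>L0 m. L0_dist m u v < r \<longrightarrow> v \<in> U)"

definition L0_borel :: "'x::topological_space measure \<Rightarrow> ('x \<Rightarrow> 'y::metric_space) measure" where
  "L0_borel m = sigma (L0 m) {U. L0_open m U}"

definition Mpi :: "'x::topological_space measure \<Rightarrow> ('x \<times> 'y::topological_space) measure set" where
  "Mpi m = {\<mu>. sets \<mu> = sets borel \<and> finite_measure \<mu> \<and> distr \<mu> borel fst = m}"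

definition narrow_top :: "'x::topological_space measure \<Rightarrow> ('x \<times> 'y::topological_space) measure topology" where
  "narrow_top m = topology_generated_by
     {{\<mu> \<in> Mpi m. (\<integral>z. \<phi> z \<partial>\<mu>) \<in> U} | \<phi> U. \<phi> \<in> Cb \<and> open U}"

definition graph_measure :: "'x::topological_space measure \<Rightarrow> ('x \<Rightarrow> 'y::topological_space) \<Rightarrow> ('x \<times> 'y) measure" where
  "graph_measure m u = distr m borel (\<lambda>x. (x, u x))"

definition mix :: "real \<Rightarrow> ('a::topological_space) measure \<Rightarrow> 'a measure \<Rightarrow> 'a measure" where
  "mix t \<mu> \<nu> = measure_of UNIV (sets borel)
     (\<lambda>A. ennreal t * emeasure \<mu> A + ennreal (1 - t) * emeasure \<nu> A)"

definition convex_fun_on_Mpi :: "'x::topological_space measure \<Rightarrow> (('x \<times> 'y::topological_space) measure \<Rightarrow> ennreal) \<Rightarrow> bool" where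
  "convex_fun_on_Mpi m T \<longleftrightarrow> (\<forall>\<mu>\<in>Mpi m. \<forall>\<nu>\<in>Mpi m. \<forall>t\<in>{0..1}.
     T (mix t \<mu> \<nu>) \<le> ennreal t * T \<mu> + ennreal (1 - t) * T \<nu>)"

definition lsc_narrow :: "'x::topological_space measure \<Rightarrow> (('x \<times> 'y::topological_space) measure \<Rightarrow> ennreal) \<Rightarrow> bool" where
  "lsc_narrow m T \<longleftrightarrow> (\<forall>c. openin (narrow_top m) {\<mu> \<in> Mpi m. c < T \<mu>})"

definition Plans :: "'x::topological_space measure \<Rightarrow> ('x \<times> 'y::metric_space) measure \<Rightarrow> ('x \<Rightarrow> 'y) measure set" where
  "Plans m \<mu> = {Q. prob_space Q \<and> space Q = L0 m \<and> sets Q = sets (L0_borel m) \<and>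
     (\<forall>\<phi>\<in>Cb. (\<integral>z. \<phi> z \<partial>\<mu>) = (\<integral>u. (\<integral>x. \<phi> (x, u x) \<partial>m) \<partial>Q))}"

definition T_E :: "'x::topological_space measure \<Rightarrow> (('x \<Rightarrow> 'y::metric_space) \<Rightarrow> ennreal) \<Rightarrow> ('x \<times> 'y) measure \<Rightarrow> ennreal" where
  "T_E m E \<mu> = (INF Q\<in>Plans m \<mu>. \<integral>\<^sup>+ u. E u \<partial>Q)"

end

theory Submission
  imports Defs
begin


lemma Cb_meas: "\<phi> \<in> Cb \<Longrightarrow> \<phi> \<in> borel_measurable borel"
  unfolding Cb_def by (auto intro: borel_measurable_continuous_onI)

lemma Cb_bound: "\<phi> \<in> Cb \<Longrightarrow> \<exists>B>0. \<forall>z. \<bar>\<phi> z\<bar> \<le> B"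
proof -
  assume "\<phi> \<in> Cb"
  then obtain B where B: "\<And>z. norm (\<phi> z) \<le> B" unfolding Cb_def bounded_iff by auto
  show ?thesis
    by (rule exI[of _ "max B 1"]) (use B in \<open>auto intro: le_max_iff_disj[THEN iffD2]\<close>)
qed

lemma graph_meas:
  fixes m :: "'x::polish_space measure" and u :: "'x \<Rightarrow> 'y::polish_space"
  assumes "sets m = sets borel" "u \<in> L0 m"
  shows "(\<lambda>x. (x, u x)) \<in> measurable m borel"
proof -
  have "(\<lambda>x. (x, u x)) \<in> measurable m (borel \<Otimes>\<^sub>M borel)"
    using assms by (intro measurable_Pair) (auto simp: L0_def intro: measurable_ident_sets)
  then show ?thesis by (simp add: borel_prod)
qed

definition pfun :: "'x::topological_space measure \<Rightarrow> ('x \<times> 'y::topological_space \<Rightarrow> real) \<Rightarrow> ('x \<Rightarrow> 'y) \<Rightarrow> real"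
  where "pfun m \<phi> u = (\<integral>x. \<phi> (x, u x) \<partial>m)"

lemma pfun_cont:
  fixes m :: "'x::polish_space measure" and u :: "'x \<Rightarrow> 'y::polish_space"
  assumes sm: "sets m = sets borel" and fm: "finite_measure m" and phi: "\<phi> \<in> Cb"
    and u: "u \<in> L0 m" and e: "\<epsilon> > 0"
  shows "\<exists>r>0. \<forall>v\<in>L0 m. L0_dist m u v < r \<longrightarrow> \<bar>pfun m \<phi> v - pfun m \<phi> u\<bar> < \<epsilon>"
proof (rule ccontr)
  assume "\<not> ?thesis"
  then have "\<forall>n::nat. \<exists>v. v \<in> L0 m \<and> L0_dist m u v < (1/4)^n \<and> \<epsilon> \<le> \<bar>pfun m \<phi> v - pfun m \<phi> u\<bar>"
    by (metis not_le zero_less_divide_1_iff zero_less_numeral zero_less_power)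
  then obtain v where v: "\<And>n. v n \<in> L0 m" "\<And>n. L0_dist m u (v n) < (1/4)^n"
    "\<And>n. \<epsilon> \<le> \<bar>pfun m \<phi> (v n) - pfun m \<phi> u\<bar>"
    by metis
  interpret finite_measure m by fact
  obtain B where B: "B > 0" "\<And>z. \<bar>\<phi> z\<bar> \<le> B" using Cb_bound[OF phi] by auto
  have vm[measurable]: "v n \<in> borel_measurable m" for n using v(1) by (simp add: L0_def)
  have um[measurable]: "u \<in> borel_measurable m" using u by (simp add: L0_def)
  define g where "g n x = min 1 (dist (u x) (v n x))" for n x
  have gm[measurable]: "g n \<in> borel_measurable m" for n unfolding g_def by measurable
  have gi: "integrable m (g n)" for n
    by (rule integrable_const_bound[where B=1]) (auto simp: g_def)
  define A where "A n = {x\<in>space m. (1/2)^n \<le> g n x}" for n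
  have Am[measurable]: "A n \<in> sets m" for n unfolding A_def by measurable
  have Ale: "measure m (A n) \<le> (1/2)^n" for n
  proof -
    have "measure m (A n) \<le> (\<integral>x. g n x \<partial>m) / (1/2)^n"
      unfolding A_def by (rule integral_Markov_inequality_measure[OF gi]) (auto simp: g_def)
    also have "\<dots> \<le> (1/4)^n / (1/2)^n"
      using v(2)[of n] by (intro divide_right_mono) (auto simp: L0_dist_def g_def)
    also have "\<dots> = (1/2)^n"
    proof -
      have "(4::real)^n = 2^n * 2^n" by (metis power_mult_distrib num_double numeral_times_numeral)
      then show ?thesis by (simp add: power_divide field_simps)
    qed
    finally show ?thesis .
  qed
  have sumA: "summable (\<lambda>n. measure m (A n))"
    by (rule summable_comparison_test'[OF summable_geometric[of "1/2"]]) (use Ale in auto)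
  have AE1: "AE x in m. eventually (\<lambda>n. x \<in> space m - A n) sequentially"
    by (rule borel_cantelli_AE1[OF Am]) (use sumA in \<open>auto simp: emeasure_eq_measure\<close>)
  have conv: "AE x in m. (\<lambda>n. \<phi> (x, v n x)) \<longlonglongrightarrow> \<phi> (x, u x)"
    using AE1
  proof eventually_elim
    case (elim x)
    then have ev: "eventually (\<lambda>n. g n x < (1/2)^n) sequentially"
      by (rule eventually_mono) (auto simp: A_def)
    have g0: "(\<lambda>n. g n x) \<longlonglongrightarrow> 0"
    proof (rule tendsto_sandwich[OF _ _ tendsto_const])
      show "eventually (\<lambda>n. 0 \<le> g n x) sequentially" by (auto simp: g_def)
      show "eventually (\<lambda>n. g n x \<le> (1/2)^n) sequentially" using ev by (rule eventually_mono) auto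
      show "(\<lambda>n. (1/2::real)^n) \<longlonglongrightarrow> 0" by (rule LIMSEQ_realpow_zero) auto
    qed
    have "eventually (\<lambda>n. g n x = dist (v n x) (u x)) sequentially"
      using ev
    proof (rule eventually_mono)
      fix n assume "g n x < (1/2)^n"
      moreover have "(1/2::real)^n \<le> 1" by (rule power_le_one) auto
      ultimately have "g n x < 1" by linarith
      then show "g n x = dist (v n x) (u x)" by (auto simp: g_def dist_commute min_def split: if_splits)
    qed
    then have "(\<lambda>n. dist (v n x) (u x)) \<longlonglongrightarrow> 0"
      by (rule Lim_transform_eventually[OF g0])
    then have "(\<lambda>n. v n x) \<longlonglongrightarrow> u x" by (rule tendsto_dist_iff[THEN iffD2])
    moreover have "isCont \<phi> (x, u x)" using phi unfolding Cb_def
      by (simp add: continuous_on_eq_continuous_at)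
    ultimately show ?case
      by (intro isCont_tendsto_compose[where g=\<phi>]) (auto intro: tendsto_intros)
  qed
  have phim[measurable]: "\<phi> \<in> borel_measurable borel" using Cb_meas[OF phi] .
  have "(\<lambda>n. \<integral>x. \<phi> (x, v n x) \<partial>m) \<longlonglongrightarrow> (\<integral>x. \<phi> (x, u x) \<partial>m)"
  proof (rule integral_dominated_convergence[where w="\<lambda>_. B"])
    show "(\<lambda>x. \<phi> (x, u x)) \<in> borel_measurable m"
      using measurable_comp[OF graph_meas[OF sm u] phim] by (simp add: comp_def)
    show "(\<lambda>x. \<phi> (x, v n x)) \<in> borel_measurable m" for n
      using measurable_comp[OF graph_meas[OF sm v(1)[of n]] phim] by (simp add: comp_def)
    show "integrable m (\<lambda>_. B)" by simp
    show "AE x in m. (\<lambda>n. \<phi> (x, v n x)) \<longlonglongrightarrow> \<phi> (x, u x)" by (rule conv)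
    show "AE x in m. norm (\<phi> (x, v n x)) \<le> B" for n using B(2) by simp
  qed
  from LIMSEQ_D[OF this e] obtain n where
    "\<bar>pfun m \<phi> (v n) - pfun m \<phi> u\<bar> < \<epsilon>" unfolding pfun_def by auto
  with v(3)[of n] show False by simp
qed

lemma L0_borel_space: "space (L0_borel m) = L0 m"
  unfolding L0_borel_def by (simp add: space_measure_of_conv)

lemma L0_borel_sets: "sets (L0_borel m) = sigma_sets (L0 m) {U. L0_open m U}"
  unfolding L0_borel_def by (rule sets_measure_of) (auto simp: L0_open_def)

lemma L0_openI_sets: "L0_open m U \<Longrightarrow> U \<in> sets (L0_borel m)"
  unfolding L0_borel_sets by auto

lemma pfun_meas:
  fixes m :: "'x::polish_space measure"
  assumes sm: "sets m = sets borel" and fm: "finite_measure m" and phi: "\<phi> \<in> Cb"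
  shows "(pfun m \<phi> :: ('x \<Rightarrow> 'y::polish_space) \<Rightarrow> real) \<in> borel_measurable (L0_borel m)"
proof (rule borel_measurableI)
  fix S :: "real set" assume S: "open S"
  have "L0_open m (pfun m \<phi> -` S \<inter> L0 m)"
    unfolding L0_open_def
  proof (intro conjI ballI)
    fix u :: "'x \<Rightarrow> 'y" assume u: "u \<in> pfun m \<phi> -` S \<inter> L0 m"
    then obtain e where e: "e > 0" "ball (pfun m \<phi> u) e \<subseteq> S"
      using S by (auto simp: open_contains_ball)
    obtain r where r: "r > 0" "\<forall>v\<in>L0 m. L0_dist m u v < r \<longrightarrow> \<bar>pfun m \<phi> v - pfun m \<phi> u\<bar> < e"
      using pfun_cont[OF sm fm phi _ e(1), of u] u by auto
    show "\<exists>r>0. \<forall>v\<in>L0 m. L0_dist m u v < r \<longrightarrow> v \<in> pfun m \<phi> -` S \<inter> L0 m"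
    proof (intro exI[of _ r] conjI ballI impI)
      fix v assume "v \<in> L0 m" "L0_dist m u v < r"
      with r e show "v \<in> pfun m \<phi> -` S \<inter> L0 m"
        by (auto simp: dist_real_def subset_iff abs_minus_commute)
    qed (use r in auto)
  qed auto
  then show "pfun m \<phi> -` S \<inter> space (L0_borel m) \<in> sets (L0_borel m)"
    by (simp add: L0_borel_space L0_openI_sets)
qed

lemma graph_in_Mpi:
  fixes m :: "'x::polish_space measure" and u :: "'x \<Rightarrow> 'y::polish_space"
  assumes "sets m = sets borel" "finite_measure m" "u \<in> L0 m"
  shows "graph_measure m u \<in> Mpi m"
proof -
  note gm = graph_meas[OF assms(1,3)]
  have "distr (graph_measure m u) borel fst = distr m borel (\<lambda>x. x)"
    unfolding graph_measure_def using gm using borel_measurable_continuous_onI[OF continuous_on_fst[OF continuous_on_id]]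
    by (subst distr_distr) (auto simp: comp_def)
  also have "\<dots> = m"
    using assms(1) by (intro measure_eqI) (simp_all add: emeasure_distr measurable_ident_sets)
  finally show ?thesis unfolding Mpi_def graph_measure_def using assms gm
    by (auto intro!: finite_measure.finite_measure_distr)
qed

lemma graph_integral:
  fixes m :: "'x::polish_space measure" and u :: "'x \<Rightarrow> 'y::polish_space"
  assumes "sets m = sets borel" "u \<in> L0 m" "\<phi> \<in> Cb"
  shows "(\<integral>z. \<phi> z \<partial>graph_measure m u) = (\<integral>x. \<phi> (x, u x) \<partial>m)"
  unfolding graph_measure_def using graph_meas[OF assms(1,2)] Cb_meas[OF assms(3)]
  by (subst integral_distr) auto



lemma sets_mix[simp]: "sets (mix t a b) = sets borel"
  unfolding mix_def using sets.sigma_sets_eq[of borel] by (simp add: sets_measure_of_conv)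

lemma space_mix[simp]: "space (mix t a b) = UNIV"
  unfolding mix_def by (simp add: space_measure_of_conv)

lemma emeasure_mix:
  fixes a :: "'a::topological_space measure"
  assumes "sets a = sets borel" "sets b = sets borel" "A \<in> sets borel"
  shows "emeasure (mix t a b) A = ennreal t * emeasure a A + ennreal (1 - t) * emeasure b A"
  unfolding mix_def
proof (rule emeasure_measure_of_sigma)
  show "sigma_algebra UNIV (sets borel)" using sets.sigma_algebra_axioms[of borel] by simp
  show "positive (sets borel) (\<lambda>A. ennreal t * emeasure a A + ennreal (1 - t) * emeasure b A)"
    unfolding positive_def by simp
  show "countably_additive (sets borel) (\<lambda>A. ennreal t * emeasure a A + ennreal (1 - t) * emeasure b A)"
    unfolding countably_additive_def
  proof (intro allI impI)
    fix F :: "nat \<Rightarrow> 'a set" assume F: "range F \<subseteq> sets borel" "disjoint_family F"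
    have "(\<Sum>i. ennreal t * emeasure a (F i) + ennreal (1 - t) * emeasure b (F i))
        = (\<Sum>i. ennreal t * emeasure a (F i)) + (\<Sum>i. ennreal (1 - t) * emeasure b (F i))"
      by (rule suminf_add[symmetric]) auto
    also have "\<dots> = ennreal t * emeasure a (\<Union>i. F i) + ennreal (1 - t) * emeasure b (\<Union>i. F i)"
      using F assms(1,2) by (simp add: suminf_emeasure)
    finally show "(\<Sum>i. ennreal t * emeasure a (F i) + ennreal (1 - t) * emeasure b (F i))
        = ennreal t * emeasure a (\<Union>(range F)) + ennreal (1 - t) * emeasure b (\<Union>(range F))" .
  qed
qed fact

lemma meas_sets_borel:
  assumes "sets M = sets borel" "f \<in> borel_measurable borel"
  shows "f \<in> borel_measurable M"
  by (subst measurable_cong_sets[OF assms(1) refl]) (rule assms(2))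

lemma nn_integral_mix:
  fixes f :: "'a::topological_space \<Rightarrow> ennreal"
  assumes sa: "sets a = sets borel" and sb: "sets b = sets borel" and f: "f \<in> borel_measurable borel"
  shows "(\<integral>\<^sup>+x. f x \<partial>mix t a b) = ennreal t * (\<integral>\<^sup>+x. f x \<partial>a) + ennreal (1 - t) * (\<integral>\<^sup>+x. f x \<partial>b)"
  using f
proof (induction rule: borel_measurable_induct)
  case (cong f g)
  then have "f = g" by auto
  with cong show ?case by simp
next
  case (set A)
  then have A: "A \<in> sets a" "A \<in> sets b" "A \<in> sets (mix t a b)" using sa sb by auto
  show ?case
    unfolding nn_integral_indicator[OF A(1)] nn_integral_indicator[OF A(2)] nn_integral_indicator[OF A(3)]
    by (rule emeasure_mix[OF sa sb set])
next
  case (mult u c)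
  have [measurable]: "u \<in> borel_measurable a" "u \<in> borel_measurable b" "u \<in> borel_measurable (mix t a b)"
    using mult(2) sa sb by (auto intro: meas_sets_borel)
  have "(\<integral>\<^sup>+x. c * u x \<partial>mix t a b) = c * (\<integral>\<^sup>+x. u x \<partial>mix t a b)"
    by (rule nn_integral_cmult) simp
  also have "\<dots> = c * (ennreal t * (\<integral>\<^sup>+x. u x \<partial>a) + ennreal (1 - t) * (\<integral>\<^sup>+x. u x \<partial>b))"
    using mult(4) by (simp only:)
  also have "\<dots> = ennreal t * (c * (\<integral>\<^sup>+x. u x \<partial>a)) + ennreal (1 - t) * (c * (\<integral>\<^sup>+x. u x \<partial>b))"
    by (simp only: distrib_left mult.left_commute)
  also have "\<dots> = ennreal t * (\<integral>\<^sup>+x. c * u x \<partial>a) + ennreal (1 - t) * (\<integral>\<^sup>+x. c * u x \<partial>b)"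
    by (simp only: nn_integral_cmult[symmetric] \<open>u \<in> borel_measurable a\<close> \<open>u \<in> borel_measurable b\<close>)
  finally show ?case .
next
  case (add u v)
  have [measurable]: "u \<in> borel_measurable a" "u \<in> borel_measurable b" "u \<in> borel_measurable (mix t a b)"
     "v \<in> borel_measurable a" "v \<in> borel_measurable b" "v \<in> borel_measurable (mix t a b)"
    using add sa sb by (auto intro: meas_sets_borel)
  have "(\<integral>\<^sup>+x. v x + u x \<partial>mix t a b) = (\<integral>\<^sup>+x. v x \<partial>mix t a b) + (\<integral>\<^sup>+x. u x \<partial>mix t a b)"
    by (rule nn_integral_add) simp_all
  also have "\<dots> = (ennreal t * (\<integral>\<^sup>+x. v x \<partial>a) + ennreal (1 - t) * (\<integral>\<^sup>+x. v x \<partial>b))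
      + (ennreal t * (\<integral>\<^sup>+x. u x \<partial>a) + ennreal (1 - t) * (\<integral>\<^sup>+x. u x \<partial>b))"
  proof -
    have "(\<integral>\<^sup>+x. u x \<partial>mix t a b) = ennreal t * (\<integral>\<^sup>+x. u x \<partial>a) + ennreal (1 - t) * (\<integral>\<^sup>+x. u x \<partial>b)"
         "(\<integral>\<^sup>+x. v x \<partial>mix t a b) = ennreal t * (\<integral>\<^sup>+x. v x \<partial>a) + ennreal (1 - t) * (\<integral>\<^sup>+x. v x \<partial>b)"
      using add by blast+
    then show ?thesis by (simp only:)
  qed
  also have "\<dots> = ennreal t * ((\<integral>\<^sup>+x. v x \<partial>a) + (\<integral>\<^sup>+x. u x \<partial>a))
       + ennreal (1 - t) * ((\<integral>\<^sup>+x. v x \<partial>b) + (\<integral>\<^sup>+x. u x \<partial>b))"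
    by (simp only: distrib_left add_ac)
  also have "\<dots> = ennreal t * (\<integral>\<^sup>+x. v x + u x \<partial>a) + ennreal (1 - t) * (\<integral>\<^sup>+x. v x + u x \<partial>b)"
    by (subst (1 2) nn_integral_add) simp_all
  finally show ?case .
next
  case (seq U)
  have [measurable]: "U i \<in> borel_measurable a" "U i \<in> borel_measurable b" "U i \<in> borel_measurable (mix t a b)" for i
    using seq(1) sa sb by (auto intro: meas_sets_borel)
  have incU: "incseq U" using seq by blast
  have IH: "(\<integral>\<^sup>+x. U i x \<partial>mix t a b) = ennreal t * (\<integral>\<^sup>+x. U i x \<partial>a) + ennreal (1 - t) * (\<integral>\<^sup>+x. U i x \<partial>b)" for i
    using seq by blast
  have SA: "(\<integral>\<^sup>+x. (SUP i. U i) x \<partial>M) = (SUP i. \<integral>\<^sup>+x. U i x \<partial>M)"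
    if "\<And>i. U i \<in> borel_measurable M" for M
    unfolding SUP_apply by (rule nn_integral_monotone_convergence_SUP[OF incU that])
  have inc: "incseq (\<lambda>i. c * (\<integral>\<^sup>+x. U i x \<partial>M))" for M and c :: ennreal
    using incU by (auto simp: incseq_def le_fun_def intro!: mult_left_mono nn_integral_mono)
  have "(\<integral>\<^sup>+x. (SUP i. U i) x \<partial>mix t a b) = (SUP i. \<integral>\<^sup>+x. U i x \<partial>mix t a b)"
    by (rule SA) simp
  also have "\<dots> = (SUP i. ennreal t * (\<integral>\<^sup>+x. U i x \<partial>a) + ennreal (1 - t) * (\<integral>\<^sup>+x. U i x \<partial>b))"
    using IH by simp
  also have "\<dots> = (SUP i. ennreal t * (\<integral>\<^sup>+x. U i x \<partial>a)) + (SUP i. ennreal (1 - t) * (\<integral>\<^sup>+x. U i x \<partial>b))"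
    by (rule ennreal_SUP_add[OF inc inc])
  also have "\<dots> = ennreal t * (SUP i. (\<integral>\<^sup>+x. U i x \<partial>a)) + ennreal (1 - t) * (SUP i. (\<integral>\<^sup>+x. U i x \<partial>b))"
    by (simp add: SUP_mult_left_ennreal)
  also have "\<dots> = ennreal t * (\<integral>\<^sup>+x. (SUP i. U i) x \<partial>a) + ennreal (1 - t) * (\<integral>\<^sup>+x. (SUP i. U i) x \<partial>b)"
    using SA[of a] SA[of b] by simp
  finally show ?case .
qed

lemma finite_mix:
  assumes "sets a = sets borel" "sets b = sets borel" "finite_measure a" "finite_measure b"
  shows "finite_measure (mix t a b)"
proof (rule finite_measureI)
  have "emeasure (mix t a b) (space (mix t a b)) = ennreal t * emeasure a UNIV + ennreal (1 - t) * emeasure b UNIV"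
    using emeasure_mix[OF assms(1,2), of UNIV t] by simp
  also have "\<dots> < \<infinity>"
  proof -
    have "emeasure a UNIV < \<infinity>" "emeasure b UNIV < \<infinity>"
      using finite_measure.emeasure_finite[OF assms(3), of "space a"] finite_measure.emeasure_finite[OF assms(4), of "space b"]
        sets_eq_imp_space_eq[OF assms(1)] sets_eq_imp_space_eq[OF assms(2)]
      by (auto simp: top.not_eq_extremum)
    then show ?thesis by (simp add: ennreal_mult_less_top)
  qed
  finally show "emeasure (mix t a b) (space (mix t a b)) \<noteq> \<infinity>" by simp
qed

lemma bounded_integrable:
  assumes "finite_measure M" "sets M = sets borel" "g \<in> borel_measurable borel" "\<And>x. \<bar>g x\<bar> \<le> (B::real)"
  shows "integrable M g"
  using assms by (intro finite_measure.integrable_const_bound[where B=B]) (auto intro: meas_sets_borel)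

lemma integral_mix_nonneg:
  fixes g :: "'a::topological_space \<Rightarrow> real"
  assumes sa: "sets a = sets borel" and sb: "sets b = sets borel" and fa: "finite_measure a" and fb: "finite_measure b"
    and g: "g \<in> borel_measurable borel" "\<And>x. 0 \<le> g x" "\<And>x. g x \<le> B" and t: "0 \<le> t" "t \<le> 1"
  shows "(\<integral>x. g x \<partial>mix t a b) = t * (\<integral>x. g x \<partial>a) + (1 - t) * (\<integral>x. g x \<partial>b)"
proof -
  have bnd: "\<And>x. \<bar>g x\<bar> \<le> B" using g by (simp add: abs_of_nonneg)
  have ia: "integrable a g" by (rule bounded_integrable[OF fa sa g(1) bnd])
  have ib: "integrable b g" by (rule bounded_integrable[OF fb sb g(1) bnd])
  have im: "integrable (mix t a b) g" by (rule bounded_integrable[OF finite_mix[OF sa sb fa fb] sets_mix g(1) bnd])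
  have gm: "(\<lambda>x. ennreal (g x)) \<in> borel_measurable borel" using g(1) by measurable
  have "ennreal (\<integral>x. g x \<partial>mix t a b) = (\<integral>\<^sup>+x. ennreal (g x) \<partial>mix t a b)"
    by (rule nn_integral_eq_integral[OF im, symmetric]) (simp add: g)
  also have "\<dots> = ennreal t * (\<integral>\<^sup>+x. ennreal (g x) \<partial>a) + ennreal (1 - t) * (\<integral>\<^sup>+x. ennreal (g x) \<partial>b)"
    by (rule nn_integral_mix[OF sa sb gm])
  also have "\<dots> = ennreal t * ennreal (\<integral>x. g x \<partial>a) + ennreal (1 - t) * ennreal (\<integral>x. g x \<partial>b)"
    by (simp add: nn_integral_eq_integral[OF ia] nn_integral_eq_integral[OF ib] g)
  also have "\<dots> = ennreal (t * (\<integral>x. g x \<partial>a) + (1 - t) * (\<integral>x. g x \<partial>b))"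
    using t g by (simp add: ennreal_mult ennreal_plus integral_nonneg)
  finally show ?thesis
    using t g by (subst (asm) ennreal_inj) (auto intro!: integral_nonneg add_nonneg_nonneg mult_nonneg_nonneg)
qed

lemma integral_mix:
  fixes g :: "'a::topological_space \<Rightarrow> real"
  assumes sa: "sets a = sets borel" and sb: "sets b = sets borel" and fa: "finite_measure a" and fb: "finite_measure b"
    and g: "g \<in> borel_measurable borel" "\<And>x. \<bar>g x\<bar> \<le> B" and t: "0 \<le> t" "t \<le> 1"
  shows "(\<integral>x. g x \<partial>mix t a b) = t * (\<integral>x. g x \<partial>a) + (1 - t) * (\<integral>x. g x \<partial>b)"
proof -
  define gp where "gp x = max (g x) 0" for x
  define gn where "gn x = max (- g x) 0" for x
  have gpm: "gp \<in> borel_measurable borel" "gn \<in> borel_measurable borel" unfolding gp_def gn_def using g(1) by measurable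
  have gpb: "\<And>x. gp x \<le> B" "\<And>x. gn x \<le> B" "\<And>x. 0 \<le> gp x" "\<And>x. 0 \<le> gn x"
    using g(2) abs_ge_zero[of "g undefined"] order_trans[OF abs_ge_zero g(2)]
    by (auto simp: gp_def gn_def abs_le_iff)
  have geq: "g = (\<lambda>x. gp x - gn x)" by (auto simp: gp_def gn_def)
  have babs: "\<And>x. \<bar>gp x\<bar> \<le> B" "\<And>x. \<bar>gn x\<bar> \<le> B" using gpb by (auto simp: abs_of_nonneg)
  have I: "(\<integral>x. gp x - gn x \<partial>M) = (\<integral>x. gp x \<partial>M) - (\<integral>x. gn x \<partial>M)"
    if "finite_measure M" "sets M = sets borel" for M
    using Bochner_Integration.integral_diff[OF bounded_integrable[OF that gpm(1) babs(1)] bounded_integrable[OF that gpm(2) babs(2)]] by simp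
  show ?thesis
    unfolding geq
    unfolding I[OF fa sa] I[OF fb sb] I[OF finite_mix[OF sa sb fa fb] sets_mix]
    unfolding integral_mix_nonneg[OF sa sb fa fb gpm(1) gpb(3) gpb(1) t] integral_mix_nonneg[OF sa sb fa fb gpm(2) gpb(4) gpb(2) t]
    by (simp add: algebra_simps)
qed

lemma fst_meas: "sets M = sets borel \<Longrightarrow> (fst :: 'a::topological_space \<times> 'b::topological_space \<Rightarrow> 'a) \<in> borel_measurable M"
  by (rule meas_sets_borel) (auto intro: borel_measurable_continuous_onI[OF continuous_on_fst[OF continuous_on_id]])

lemma mix_in_Mpi:
  assumes a: "a \<in> Mpi m" and b: "b \<in> Mpi m" and t: "0 \<le> t" "t \<le> 1"
  shows "mix t a b \<in> Mpi m"
proof -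
  have sa: "sets a = sets borel" and sb: "sets b = sets borel" and fa: "finite_measure a" and fb: "finite_measure b"
    and da: "distr a borel fst = m" and db: "distr b borel fst = m"
    using a b by (auto simp: Mpi_def)
  have "distr (mix t a b) borel fst = m"
  proof (rule measure_eqI)
    show "sets (distr (mix t a b) borel fst) = sets m" using da by auto
    fix A assume "A \<in> sets (distr (mix t a b) borel fst)"
    then have A: "A \<in> sets borel" by simp
    have fA: "fst -` A \<in> sets borel"
      using measurable_sets[OF fst_meas[of borel] A] by simp
    have ea: "emeasure a (fst -` A) = emeasure m A"
      using emeasure_distr[OF fst_meas[OF sa] A] da sets_eq_imp_space_eq[OF sa] by simp
    have eb: "emeasure b (fst -` A) = emeasure m A"
      using emeasure_distr[OF fst_meas[OF sb] A] db sets_eq_imp_space_eq[OF sb] by simp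
    have "emeasure (distr (mix t a b) borel fst) A = emeasure (mix t a b) (fst -` A)"
      using emeasure_distr[OF fst_meas[OF sets_mix] A] by simp
    also have "\<dots> = ennreal t * emeasure m A + ennreal (1 - t) * emeasure m A"
      using emeasure_mix[OF sa sb fA] ea eb by simp
    also have "\<dots> = (ennreal t + ennreal (1 - t)) * emeasure m A" by (simp add: distrib_right)
    also have "ennreal t + ennreal (1 - t) = 1" using t by (simp flip: ennreal_plus)
    finally show "emeasure (distr (mix t a b) borel fst) A = emeasure m A" by simp
  qed
  then show ?thesis unfolding Mpi_def using finite_mix[OF sa sb fa fb] by simp
qed

lemma combo:
  fixes m :: "'x::topological_space measure" and T :: "('x \<times> 'y::topological_space) measure \<Rightarrow> ennreal"
  assumes conv: "convex_fun_on_Mpi m T"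
  shows "finite J \<Longrightarrow> (\<forall>j\<in>J. \<nu> j \<in> Mpi m) \<Longrightarrow> (\<forall>j\<in>J. 0 \<le> w j) \<Longrightarrow> sum w J = 1 \<Longrightarrow>
    \<exists>\<rho>\<in>Mpi m. T \<rho> \<le> (\<Sum>j\<in>J. ennreal (w j) * T (\<nu> j)) \<and>
      (\<forall>g B. g \<in> borel_measurable borel \<longrightarrow> (\<forall>x. \<bar>g x\<bar> \<le> B) \<longrightarrow>
         (\<integral>x. g x \<partial>\<rho>) = (\<Sum>j\<in>J. w j * (\<integral>x. g x \<partial>\<nu> j)))"
proof (induction J arbitrary: w rule: finite_induct)
  case empty
  then show ?case by simp
next
  case (insert j J)
  have nuj: "\<nu> j \<in> Mpi m" using insert by simp
  have wj: "0 \<le> w j" using insert by simp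
  have wJ: "\<forall>k\<in>J. 0 \<le> w k" using insert by simp
  have sum1: "w j + sum w J = 1" using insert by simp
  show ?case
  proof (cases "sum w J = 0")
    case True
    then have z: "\<forall>k\<in>J. w k = 0" using sum_nonneg_eq_0_iff[OF insert(1)] wJ by auto
    have wj1: "w j = 1" using sum1 True by simp
    show ?thesis
    proof (intro bexI[of _ "\<nu> j"] conjI allI impI)
      show "T (\<nu> j) \<le> (\<Sum>k\<in>insert j J. ennreal (w k) * T (\<nu> k))"
        using insert(1,2) z wj1 by simp
      fix g :: "'x \<times> 'y \<Rightarrow> real" and B
      show "(\<integral>x. g x \<partial>\<nu> j) = (\<Sum>k\<in>insert j J. w k * (\<integral>x. g x \<partial>\<nu> k))"
        using insert(1,2) z wj1 by simp
    qed (rule nuj)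
  next
    case False
    define s where "s = sum w J"
    have s: "s > 0" using False wJ sum_nonneg[of J w] unfolding s_def by force
    define w' where "w' k = w k / s" for k
    have "\<exists>\<rho>\<in>Mpi m. T \<rho> \<le> (\<Sum>k\<in>J. ennreal (w' k) * T (\<nu> k)) \<and>
      (\<forall>g B. g \<in> borel_measurable borel \<longrightarrow> (\<forall>x. \<bar>g x\<bar> \<le> B) \<longrightarrow>
         (\<integral>x. g x \<partial>\<rho>) = (\<Sum>k\<in>J. w' k * (\<integral>x. g x \<partial>\<nu> k)))"
    proof (rule insert.IH)
      show "\<forall>k\<in>J. \<nu> k \<in> Mpi m" using insert by simp
      show "\<forall>k\<in>J. 0 \<le> w' k" using wJ s by (simp add: w'_def)
      show "sum w' J = 1" using s by (simp add: w'_def s_def flip: sum_divide_distrib)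
    qed
    then obtain \<rho> where \<rho>: "\<rho> \<in> Mpi m" "T \<rho> \<le> (\<Sum>k\<in>J. ennreal (w' k) * T (\<nu> k))"
      "\<And>g B. g \<in> borel_measurable borel \<Longrightarrow> (\<forall>x. \<bar>g x\<bar> \<le> B) \<Longrightarrow>
         (\<integral>x. g x \<partial>\<rho>) = (\<Sum>k\<in>J. w' k * (\<integral>x. g x \<partial>\<nu> k))" by blast
    have t1: "w j \<le> 1" "1 - w j = s" using sum1 s by (auto simp: s_def)
    show ?thesis
    proof (intro bexI[of _ "mix (w j) (\<nu> j) \<rho>"] conjI allI impI)
      show "mix (w j) (\<nu> j) \<rho> \<in> Mpi m" by (rule mix_in_Mpi[OF nuj \<rho>(1) wj t1(1)])
      have "T (mix (w j) (\<nu> j) \<rho>) \<le> ennreal (w j) * T (\<nu> j) + ennreal (1 - w j) * T \<rho>"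
        using conv nuj \<rho>(1) wj t1(1) unfolding convex_fun_on_Mpi_def by auto
      also have "\<dots> \<le> ennreal (w j) * T (\<nu> j) + ennreal s * (\<Sum>k\<in>J. ennreal (w' k) * T (\<nu> k))"
        using \<rho>(2) t1(2) by (intro add_left_mono) (simp add: mult_left_mono)
      also have "ennreal s * (\<Sum>k\<in>J. ennreal (w' k) * T (\<nu> k)) = (\<Sum>k\<in>J. ennreal (w k) * T (\<nu> k))"
      proof -
        have "ennreal s * ennreal (w' k) = ennreal (w k)" if "k \<in> J" for k
          using s wJ that by (simp add: w'_def flip: ennreal_mult)
        then show ?thesis by (simp add: sum_distrib_left mult.assoc[symmetric])
      qed
      finally show "T (mix (w j) (\<nu> j) \<rho>) \<le> (\<Sum>k\<in>insert j J. ennreal (w k) * T (\<nu> k))"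
        using insert(1,2) by simp
    next
      fix g :: "'x \<times> 'y \<Rightarrow> real" and B
      assume g: "g \<in> borel_measurable borel" "\<forall>x. \<bar>g x\<bar> \<le> B"
      have "(\<integral>x. g x \<partial>mix (w j) (\<nu> j) \<rho>) = w j * (\<integral>x. g x \<partial>\<nu> j) + (1 - w j) * (\<integral>x. g x \<partial>\<rho>)"
        using nuj \<rho>(1) g wj t1(1)
        by (intro integral_mix[where B=B]) (auto simp: Mpi_def)
      also have "(1 - w j) * (\<integral>x. g x \<partial>\<rho>) = (\<Sum>k\<in>J. w k * (\<integral>x. g x \<partial>\<nu> k))"
        using \<rho>(3)[OF g] t1(2) s by (simp add: w'_def sum_distrib_left)
      finally show "(\<integral>x. g x \<partial>mix (w j) (\<nu> j) \<rho>) = (\<Sum>k\<in>insert j J. w k * (\<integral>x. g x \<partial>\<nu> k))"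
        using insert(1,2) by simp
    qed
  qed
qed



lemma gen_nbhd:
  assumes "generate_topology_on S U"
  shows "x \<in> U \<Longrightarrow> \<exists>F. finite F \<and> F \<subseteq> S \<and> (\<forall>A\<in>F. x \<in> A) \<and> (\<forall>y\<in>\<Union>S. (\<forall>A\<in>F. y \<in> A) \<longrightarrow> y \<in> U)"
  using assms
proof (induction arbitrary: x rule: generate_topology_on.induct)
  case Empty
  then show ?case by simp
next
  case (Int a b)
  then have xa: "x \<in> a" and xb: "x \<in> b" by auto
  obtain F1 where F1: "finite F1" "F1 \<subseteq> S" "\<forall>A\<in>F1. x \<in> A" "\<forall>y\<in>\<Union>S. (\<forall>A\<in>F1. y \<in> A) \<longrightarrow> y \<in> a"
    using Int.IH(1)[OF xa] by blast
  obtain F2 where F2: "finite F2" "F2 \<subseteq> S" "\<forall>A\<in>F2. x \<in> A" "\<forall>y\<in>\<Union>S. (\<forall>A\<in>F2. y \<in> A) \<longrightarrow> y \<in> b"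
    using Int.IH(2)[OF xb] by blast
  show ?case
  proof (intro exI[of _ "F1 \<union> F2"] conjI ballI impI)
    show "finite (F1 \<union> F2)" using F1 F2 by simp
    show "F1 \<union> F2 \<subseteq> S" using F1 F2 by simp
  next
    fix A assume "A \<in> F1 \<union> F2" then show "x \<in> A" using F1 F2 by blast
  next
    fix y assume "y \<in> \<Union>S" "\<forall>A\<in>F1 \<union> F2. y \<in> A"
    then show "y \<in> a \<inter> b" using F1(4) F2(4) by blast
  qed
next
  case (UN K)
  then obtain k where "k \<in> K" "x \<in> k" by auto
  from UN.IH[OF this] obtain F where "finite F" "F \<subseteq> S" "\<forall>A\<in>F. x \<in> A" "\<forall>y\<in>\<Union>S. (\<forall>A\<in>F. y \<in> A) \<longrightarrow> y \<in> k"
    by blast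
  then show ?case using \<open>k \<in> K\<close> by (intro exI[of _ F]) blast
next
  case (Basis s)
  then show ?case by (intro exI[of _ "{s}"]) auto
qed

lemma lsc_nbhd:
  fixes m :: "'x::topological_space measure" and T :: "('x \<times> 'y::topological_space) measure \<Rightarrow> ennreal"
  assumes lsc: "lsc_narrow m T" and mu: "\<mu> \<in> Mpi m" and c: "c < T \<mu>"
  shows "\<exists>\<Phi> \<delta>. finite \<Phi> \<and> \<Phi> \<subseteq> Cb \<and> \<delta> > 0 \<and>
     (\<forall>\<nu>\<in>Mpi m. (\<forall>\<phi>\<in>\<Phi>. \<bar>(\<integral>z. \<phi> z \<partial>\<nu>) - (\<integral>z. \<phi> z \<partial>\<mu>)\<bar> < \<delta>) \<longrightarrow> c < T \<nu>)"
proof -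
  define S where "S = {{\<mu> \<in> Mpi m. (\<integral>z. \<phi> z \<partial>\<mu>) \<in> U} | (\<phi> :: 'x \<times> 'y \<Rightarrow> real) U. \<phi> \<in> Cb \<and> open U}"
  have "openin (narrow_top m) {\<mu> \<in> Mpi m. c < T \<mu>}"
    using lsc unfolding lsc_narrow_def by blast
  then have "generate_topology_on S {\<mu> \<in> Mpi m. c < T \<mu>}"
    unfolding narrow_top_def S_def by (rule openin_topology_generated_by)
  from gen_nbhd[OF this, of \<mu>] mu c obtain F where F: "finite F" "F \<subseteq> S" "\<forall>A\<in>F. \<mu> \<in> A"
    "\<forall>y\<in>\<Union>S. (\<forall>A\<in>F. y \<in> A) \<longrightarrow> y \<in> {\<mu> \<in> Mpi m. c < T \<mu>}" by auto
  have US: "Mpi m \<subseteq> \<Union>S"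
  proof
    fix \<nu> :: "('x \<times> 'y) measure" assume "\<nu> \<in> Mpi m"
    moreover have "(\<lambda>_. 0) \<in> (Cb :: ('x \<times> 'y \<Rightarrow> real) set)" by (simp add: Cb_def)
    ultimately show "\<nu> \<in> \<Union>S" unfolding S_def
      by (intro UnionI[of "{\<mu> \<in> Mpi m. (\<integral>z. 0 \<partial>\<mu>) \<in> UNIV}"]) blast+
  qed
  have "\<forall>A\<in>F. \<exists>\<phi> U. \<phi> \<in> Cb \<and> open U \<and> A = {\<mu> \<in> Mpi m. (\<integral>z. \<phi> z \<partial>\<mu>) \<in> U}"
  proof
    fix A assume "A \<in> F"
    then have "A \<in> S" using F(2) by blast
    then show "\<exists>\<phi> U. \<phi> \<in> Cb \<and> open U \<and> A = {\<mu> \<in> Mpi m. (\<integral>z. \<phi> z \<partial>\<mu>) \<in> U}"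
      unfolding S_def by blast
  qed
  from bchoice[OF this] obtain f where f: "\<forall>A\<in>F. \<exists>U. f A \<in> Cb \<and> open U \<and> A = {\<mu> \<in> Mpi m. (\<integral>z. f A z \<partial>\<mu>) \<in> U}"
    by blast
  from bchoice[OF this] obtain U where U: "\<forall>A\<in>F. f A \<in> Cb \<and> open (U A) \<and> A = {\<mu> \<in> Mpi m. (\<integral>z. f A z \<partial>\<mu>) \<in> U A}"
    by blast
  have fU: "\<And>A. A \<in> F \<Longrightarrow> f A \<in> Cb \<and> open (U A) \<and> A = {\<mu> \<in> Mpi m. (\<integral>z. f A z \<partial>\<mu>) \<in> U A}"
    using U by blast
  have "\<forall>A\<in>F. \<exists>e>0. ball (\<integral>z. f A z \<partial>\<mu>) e \<subseteq> U A"
  proof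
    fix A assume A: "A \<in> F"
    then have "(\<integral>z. f A z \<partial>\<mu>) \<in> U A" using fU[OF A] F(3) by blast
    then show "\<exists>e>0. ball (\<integral>z. f A z \<partial>\<mu>) e \<subseteq> U A" using fU[OF A] by (simp add: open_contains_ball)
  qed
  from bchoice[OF this] obtain e where e: "\<forall>A\<in>F. e A > 0 \<and> ball (\<integral>z. f A z \<partial>\<mu>) (e A) \<subseteq> U A"
    by blast
  define \<delta> where "\<delta> = Min (insert 1 (e ` F))"
  have \<delta>: "\<delta> > 0" unfolding \<delta>_def using F(1) e by (subst Min_gr_iff) auto
  have \<delta>le: "\<delta> \<le> e A" if "A \<in> F" for A unfolding \<delta>_def using F(1) that by (intro Min_le) auto
  show ?thesis
  proof (intro exI[of _ "f ` F"] exI[of _ \<delta>] conjI ballI impI)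
    show "finite (f ` F)" using F(1) by simp
    show "f ` F \<subseteq> Cb" using fU by auto
    show "\<delta> > 0" by fact
    fix \<nu> assume nu: "\<nu> \<in> Mpi m" and cl: "\<forall>\<phi>\<in>f ` F. \<bar>(\<integral>z. \<phi> z \<partial>\<nu>) - (\<integral>z. \<phi> z \<partial>\<mu>)\<bar> < \<delta>"
    have "\<nu> \<in> A" if A: "A \<in> F" for A
    proof -
      have "\<bar>(\<integral>z. f A z \<partial>\<nu>) - (\<integral>z. f A z \<partial>\<mu>)\<bar> < e A" using cl A \<delta>le[OF A] by force
      then have "(\<integral>z. f A z \<partial>\<nu>) \<in> ball (\<integral>z. f A z \<partial>\<mu>) (e A)"
        by (simp add: dist_real_def)
      then have "(\<integral>z. f A z \<partial>\<nu>) \<in> U A" using e A by blast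
      then show ?thesis using fU[OF A] nu by blast
    qed
    then show "c < T \<nu>" using F(4) US nu by blast
  qed
qed



lemma floor_close:
  fixes a b d :: real
  assumes "d > 0" "\<lfloor>a / d\<rfloor> = \<lfloor>b / d\<rfloor>"
  shows "\<bar>a - b\<bar> < d"
proof -
  have e: "real_of_int \<lfloor>a / d\<rfloor> = real_of_int \<lfloor>b / d\<rfloor>" using assms(2) by simp
  have "a / d - b / d < 1" "b / d - a / d < 1"
    using e floor_correct[of "a/d"] floor_correct[of "b/d"] by linarith+
  then have "\<bar>a / d - b / d\<bar> < 1" by (simp add: abs_less_iff)
  moreover have "a - b = d * (a / d - b / d)" using assms(1) by (simp add: right_diff_distrib)
  ultimately show ?thesis using assms(1) by (simp add: abs_mult)
qed

lemma abs_integral_le: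
  fixes g h :: "'a \<Rightarrow> real"
  assumes "integrable M g" "integrable M h" "\<And>x. x \<in> space M \<Longrightarrow> \<bar>g x\<bar> \<le> h x"
  shows "\<bar>\<integral>x. g x \<partial>M\<bar> \<le> (\<integral>x. h x \<partial>M)"
proof -
  have "(\<integral>x. g x \<partial>M) \<le> (\<integral>x. h x \<partial>M)"
    by (rule integral_mono[OF assms(1,2)]) (use assms(3) in \<open>force simp: abs_le_iff\<close>)
  moreover have "(\<integral>x. - g x \<partial>M) \<le> (\<integral>x. h x \<partial>M)"
    by (rule integral_mono[OF integrable_minus[OF assms(1)] assms(2)]) (use assms(3) in \<open>force simp: abs_le_iff\<close>)
  ultimately show ?thesis by (simp add: abs_le_iff)
qed

lemma approx:
  fixes Q :: "'a measure" and F :: "'i set" and f :: "'i \<Rightarrow> 'a \<Rightarrow> real" and e :: "'a \<Rightarrow> real"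
  assumes Q: "prob_space Q" and F: "finite F"
    and fm: "\<And>i. i \<in> F \<Longrightarrow> f i \<in> borel_measurable Q"
    and fb: "\<And>i x. i \<in> F \<Longrightarrow> x \<in> space Q \<Longrightarrow> \<bar>f i x\<bar> \<le> B"
    and em: "e \<in> borel_measurable Q" and e0: "\<And>x. x \<in> space Q \<Longrightarrow> 0 \<le> e x"
    and ei: "integrable Q e"
    and G: "G \<in> sets Q" "AE x in Q. x \<in> G"
    and \<delta>: "\<delta> > 0"
  shows "\<exists>(K :: (('i \<Rightarrow> int) \<times> int) set) p w. finite K \<and> (\<forall>k\<in>K. p k \<in> G \<and> 0 \<le> w k) \<and> sum w K = 1 \<and>
     (\<forall>i\<in>F. \<bar>(\<Sum>k\<in>K. w k * f i (p k)) - (\<integral>x. f i x \<partial>Q)\<bar> < \<delta>) \<and>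
     (\<Sum>k\<in>K. w k * e (p k)) < (\<integral>x. e x \<partial>Q) + \<delta>"
proof -
  interpret prob_space Q by fact
  define B1 where "B1 = max B 1"
  have B1: "B1 > 0" "\<And>i x. i \<in> F \<Longrightarrow> x \<in> space Q \<Longrightarrow> \<bar>f i x\<bar> \<le> B1"
    using fb by (auto simp: B1_def intro: le_max_iff_disj[THEN iffD2])
  define I where "I = (\<integral>x. e x \<partial>Q)"
  have I0: "I \<ge> 0" unfolding I_def using e0 by (intro integral_nonneg_AE) auto
  define \<eta> where "\<eta> = min (1/2) (min (\<delta> / (8 * B1)) (\<delta> / (4 * (I + \<delta> + 1))))"
  have \<eta>: "\<eta> > 0" "\<eta> \<le> 1/2" "\<eta> \<le> \<delta> / (8 * B1)" "\<eta> \<le> \<delta> / (4 * (I + \<delta> + 1))"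
  proof -
    have "\<delta> / (8 * B1) > 0" "\<delta> / (4 * (I + \<delta> + 1)) > 0" using \<delta> B1(1) I0 by auto
    then show "\<eta> > 0" unfolding \<eta>_def by simp
    show "\<eta> \<le> 1/2" unfolding \<eta>_def by (rule min.cobounded1)
  qed (auto simp: \<eta>_def)
  define d where "d = \<delta> / 4"
  have d: "d > 0" using \<delta> by (simp add: d_def)
  define D where "D n = {x \<in> space Q. x \<in> G \<and> e x \<le> real n}" for n :: nat
  have Dm: "D n \<in> sets Q" for n
  proof -
    have "D n = G \<inter> {x \<in> space Q. e x \<le> real n}" using sets.sets_into_space[OF G(1)] by (auto simp: D_def)
    then show ?thesis using G(1) em by auto
  qed
  have "(\<lambda>n. measure Q (D n)) \<longlonglongrightarrow> measure Q (\<Union>n. D n)"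
    by (rule finite_Lim_measure_incseq) (use Dm in \<open>auto simp: incseq_def D_def\<close>)
  moreover have "(\<Union>n. D n) = G \<inter> space Q"
  proof -
    have "\<exists>n. e x \<le> real n" for x by (rule real_arch_simple)
    then show ?thesis using sets.sets_into_space[OF G(1)] by (auto simp: D_def)
  qed
  moreover have "measure Q (G \<inter> space Q) = 1"
    using G sets.sets_into_space[OF G(1)] by (simp add: Int_absorb2 prob_eq_1)
  ultimately have "(\<lambda>n. measure Q (D n)) \<longlonglongrightarrow> 1" by simp
  then have "eventually (\<lambda>n. 1 - \<eta> < measure Q (D n)) sequentially"
    using \<eta>(1) by (intro order_tendstoD) auto
  then obtain n where n: "1 - \<eta> < measure Q (D n)" by (auto simp: eventually_sequentially)
  define DD where "DD = D n"
  define q where "q = measure Q DD"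
  have DD: "DD \<in> sets Q" "DD \<subseteq> space Q" "DD \<subseteq> G" "\<And>x. x \<in> DD \<Longrightarrow> e x \<le> real n"
    using Dm[of n] by (auto simp: DD_def D_def)
  have q: "1 - \<eta> < q" "q \<le> 1" "q > 0" using n \<eta> by (auto simp: q_def DD_def)
  define key where "key x = (restrict (\<lambda>i. \<lfloor>f i x / d\<rfloor>) F, \<lfloor>e x / d\<rfloor>)" for x
  define K where "K = key ` DD"
  define L where "L k = {x \<in> DD. key x = k}" for k
  have keyK: "key x \<in> K" if "x \<in> DD" for x using that by (simp add: K_def)
  have L_in: "x \<in> L k \<longleftrightarrow> x \<in> DD \<and> key x = k" for x k by (simp add: L_def)
  define N where "N = \<lceil>B1 / d\<rceil> + 1"
  define M where "M = \<lceil>real n / d\<rceil>"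
  have "K \<subseteq> (PiE F (\<lambda>_. {-N..N})) \<times> {0..M}"
  proof
    fix k assume "k \<in> K"
    then obtain x where x: "x \<in> DD" "k = key x" by (auto simp: K_def)
    have "\<lfloor>f i x / d\<rfloor> \<in> {-N..N}" if i: "i \<in> F" for i
    proof -
      have fx: "\<bar>f i x\<bar> \<le> B1" using B1(2)[OF i] x DD(2) by auto
      have f1: "f i x \<le> B1" "- B1 \<le> f i x" using fx by (simp_all add: abs_le_iff)
      have "f i x / d \<le> B1 / d" using divide_right_mono[OF f1(1)] d by simp
      moreover have "(- B1) / d \<le> f i x / d" using divide_right_mono[OF f1(2)] d by simp
      then have "- (B1 / d) \<le> f i x / d" by simp
      ultimately have "f i x / d \<le> B1 / d" "- (B1 / d) \<le> f i x / d" by auto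
      moreover have "real_of_int \<lfloor>f i x / d\<rfloor> \<le> f i x / d" "f i x / d < real_of_int \<lfloor>f i x / d\<rfloor> + 1"
        by (rule of_int_floor_le, rule real_of_int_floor_add_one_gt)
      moreover have "B1 / d \<le> real_of_int \<lceil>B1 / d\<rceil>" by (rule le_of_int_ceiling)
      ultimately have "real_of_int \<lfloor>f i x / d\<rfloor> \<le> real_of_int N" "- real_of_int N \<le> real_of_int \<lfloor>f i x / d\<rfloor>"
        unfolding N_def by linarith+
      then show ?thesis by simp
    qed
    moreover have "\<lfloor>e x / d\<rfloor> \<in> {0..M}"
    proof -
      have "0 \<le> e x" "e x \<le> real n" using x DD e0 by auto
      then have "0 \<le> e x / d" "e x / d \<le> real n / d" using d by (auto intro: divide_right_mono)
      moreover have "real n / d \<le> real_of_int \<lceil>real n / d\<rceil>" by (rule le_of_int_ceiling)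
      moreover have "real_of_int \<lfloor>e x / d\<rfloor> \<le> e x / d" by (rule of_int_floor_le)
      ultimately have "real_of_int \<lfloor>e x / d\<rfloor> \<le> real_of_int M" unfolding M_def by linarith
      moreover have "0 \<le> \<lfloor>e x / d\<rfloor>" using \<open>0 \<le> e x / d\<close> by simp
      ultimately have "\<lfloor>e x / d\<rfloor> \<le> M" "0 \<le> \<lfloor>e x / d\<rfloor>" by simp_all
      then show ?thesis by simp
    qed
    ultimately show "k \<in> (PiE F (\<lambda>_. {-N..N})) \<times> {0..M}" using x by (auto simp: key_def)
  qed
  moreover have "finite ((PiE F (\<lambda>_. {-N..N})) \<times> {0..M})" using F by (intro finite_cartesian_product finite_PiE) auto
  ultimately have Kfin: "finite K" by (rule finite_subset)
  have Lm: "L k \<in> sets Q" if k: "k \<in> K" for k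
  proof -
    obtain y where y: "y \<in> DD" "k = key y" using k by (auto simp: K_def)
    have "L k = DD \<inter> ({x \<in> space Q. \<forall>i\<in>F. \<lfloor>f i x / d\<rfloor> = fst k i} \<inter> {x \<in> space Q. \<lfloor>e x / d\<rfloor> = snd k})"
      using y DD(2) by (auto simp: L_def key_def restrict_def fun_eq_iff split: if_splits)
    moreover have "{x \<in> space Q. \<forall>i\<in>F. \<lfloor>f i x / d\<rfloor> = fst k i} \<in> sets Q"
    proof (rule sets.sets_Collect_finite_All[OF _ F])
      fix i assume "i \<in> F"
      then have [measurable]: "f i \<in> borel_measurable Q" by (rule fm)
      show "{x \<in> space Q. \<lfloor>f i x / d\<rfloor> = fst k i} \<in> sets Q" by measurable
    qed
    moreover have "{x \<in> space Q. \<lfloor>e x / d\<rfloor> = snd k} \<in> sets Q" using em by measurable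
    ultimately show ?thesis using DD(1) by auto
  qed
  define p where "p k = (SOME x. x \<in> L k)" for k
  have p: "p k \<in> L k" if kK: "k \<in> K" for k
  proof -
    obtain y where "y \<in> DD" "k = key y" using kK by (auto simp: K_def)
    then have "y \<in> L k" by (simp add: L_def)
    then show ?thesis unfolding p_def by (rule someI)
  qed
  have pDD: "p k \<in> DD" "key (p k) = k" if "k \<in> K" for k using p[OF that] by (auto simp: L_def)
  have indL: "indicator (L k) x = (if key x = k then indicator DD x else 0 :: real)" for k x
    by (auto simp: L_def indicator_def)
  have sum_ind: "(\<Sum>k\<in>K. c k * indicator (L k) x) = c (key x) * indicator DD x" for c :: "_ \<Rightarrow> real" and x
  proof -
    have "(\<Sum>k\<in>K. c k * indicator (L k) x) = (\<Sum>k\<in>K. if key x = k then c k * indicator DD x else 0)"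
      by (rule sum.cong) (auto simp: indL)
    also have "\<dots> = (if key x \<in> K then c (key x) * indicator DD x else 0)"
      using Kfin by (simp add: sum.delta)
    also have "\<dots> = c (key x) * indicator DD x" using keyK by (auto simp: indicator_def)
    finally show ?thesis .
  qed
  have intL: "integrable Q (indicator (L k) :: _ \<Rightarrow> real)" if "k \<in> K" for k
    using Lm[OF that] sets.sets_into_space[OF Lm[OF that]] by (simp add: integrable_indicator_iff Int_absorb2 emeasure_eq_measure)
  have int_sum_i: "integrable Q (\<lambda>x. \<Sum>k\<in>K. c k * indicator (L k) x)" for c :: "_ \<Rightarrow> real"
    using intL by (intro Bochner_Integration.integrable_sum) auto
  have int_sum: "(\<integral>x. (\<Sum>k\<in>K. c k * indicator (L k) x) \<partial>Q) = (\<Sum>k\<in>K. c k * measure Q (L k))" for c :: "_ \<Rightarrow> real"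
  proof -
    have "(\<integral>x. (\<Sum>k\<in>K. c k * indicator (L k) x) \<partial>Q) = (\<Sum>k\<in>K. (\<integral>x. c k * indicator (L k) x \<partial>Q))"
      using intL by (intro Bochner_Integration.integral_sum) auto
    also have "\<dots> = (\<Sum>k\<in>K. c k * measure Q (L k))"
      using sets.sets_into_space[OF Lm] by (intro sum.cong) (auto simp: Int_absorb2)
    finally show ?thesis .
  qed
  have simple_eq: "(\<lambda>x. c (key x) * indicator DD x) = (\<lambda>x. \<Sum>k\<in>K. c k * indicator (L k) x)" for c :: "_ \<Rightarrow> real"
    by (simp add: sum_ind)
  have sumL: "(\<Sum>k\<in>K. measure Q (L k)) = q"
  proof -
    have "(\<Sum>k\<in>K. measure Q (L k)) = (\<integral>x. (\<Sum>k\<in>K. 1 * indicator (L k) x) \<partial>Q)" by (subst int_sum) simp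
    also have "\<dots> = (\<integral>x. indicator DD x \<partial>Q)" by (simp only: sum_ind) simp
    also have "\<dots> = q" using DD(2) by (simp add: q_def Int_absorb2)
    finally show ?thesis .
  qed
  define w where "w k = measure Q (L k) / q" for k
  have w0: "0 \<le> w k" for k using q by (simp add: w_def)
  have w1: "sum w K = 1" using sumL q by (simp add: w_def flip: sum_divide_distrib)
  have wsum: "(\<Sum>k\<in>K. w k * c k) = (\<integral>x. c (key x) * indicator DD x \<partial>Q) / q" for c :: "_ \<Rightarrow> real"
    unfolding simple_eq int_sum w_def by (simp add: sum_divide_distrib mult_ac)
  have simple_int: "integrable Q (\<lambda>x. c (key x) * indicator DD x)" for c :: "_ \<Rightarrow> real"
    unfolding simple_eq by (rule int_sum_i)
  have indDD: "integrable Q (indicator DD :: _ \<Rightarrow> real)"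
    using DD by (simp add: integrable_indicator_iff Int_absorb2 emeasure_eq_measure)
  have close_f: "\<bar>f i (p (key x)) - f i x\<bar> < d" if "i \<in> F" "x \<in> DD" for i x
  proof -
    have "key (p (key x)) = key x" using pDD keyK that(2) by auto
    then have "fst (key (p (key x))) i = fst (key x) i" by simp
    then have "\<lfloor>f i (p (key x)) / d\<rfloor> = \<lfloor>f i x / d\<rfloor>"
      using that(1) unfolding key_def by simp
    then show ?thesis by (rule floor_close[OF d])
  qed
  have close_e: "\<bar>e (p (key x)) - e x\<bar> < d" if "x \<in> DD" for x
  proof -
    have "key (p (key x)) = key x" using pDD keyK that by auto
    then have "\<lfloor>e (p (key x)) / d\<rfloor> = \<lfloor>e x / d\<rfloor>" by (auto simp: key_def)
    then show ?thesis by (rule floor_close[OF d])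
  qed
  have intDD_const: "(\<integral>x. c * indicator DD x \<partial>Q) = c * q" for c :: real
    using DD(2) by (simp add: q_def Int_absorb2)
  have est_f: "\<bar>(\<Sum>k\<in>K. w k * f i (p k)) - (\<integral>x. f i x \<partial>Q)\<bar> < \<delta>" if i: "i \<in> F" for i
  proof -
    have [measurable]: "f i \<in> borel_measurable Q" by (rule fm[OF i])
    have fi: "integrable Q (f i)"
      by (rule integrable_const_bound[where B=B1]) (use B1(2)[OF i] in auto)
    have fiD: "integrable Q (\<lambda>x. f i x * indicator DD x)" by (rule integrable_real_mult_indicator[OF DD(1) fi])
    define S0 where "S0 = (\<integral>x. f i (p (key x)) * indicator DD x \<partial>Q)"
    have Sint: "integrable Q (\<lambda>x. f i (p (key x)) * indicator DD x)" by (rule simple_int)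
    have ws: "(\<Sum>k\<in>K. w k * f i (p k)) = S0 / q" unfolding S0_def by (rule wsum)
    have A1: "\<bar>S0 - (\<integral>x. f i x * indicator DD x \<partial>Q)\<bar> \<le> d"
    proof -
      have "S0 - (\<integral>x. f i x * indicator DD x \<partial>Q) = (\<integral>x. f i (p (key x)) * indicator DD x - f i x * indicator DD x \<partial>Q)"
        unfolding S0_def by (rule Bochner_Integration.integral_diff[OF Sint fiD, symmetric])
      also have "\<bar>\<dots>\<bar> \<le> (\<integral>x. d * indicator DD x \<partial>Q)"
      proof (rule abs_integral_le)
        show "integrable Q (\<lambda>x. f i (p (key x)) * indicator DD x - f i x * indicator DD x)" using Sint fiD by simp
        show "integrable Q (\<lambda>x. d * indicator DD x)" using indDD by simp
        fix x assume "x \<in> space Q"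
        show "\<bar>f i (p (key x)) * indicator DD x - f i x * indicator DD x\<bar> \<le> d * indicator DD x"
          using close_f[OF i, of x] by (cases "x \<in> DD") auto
      qed
      also have "\<dots> = d * q" by (rule intDD_const)
      also have "\<dots> \<le> d" using q d by (simp add: mult_left_le)
      finally show ?thesis .
    qed
    have A2: "\<bar>(\<integral>x. f i x * indicator DD x \<partial>Q) - (\<integral>x. f i x \<partial>Q)\<bar> \<le> B1 * (1 - q)"
    proof -
      have "(\<integral>x. f i x * indicator DD x \<partial>Q) - (\<integral>x. f i x \<partial>Q) = (\<integral>x. f i x * indicator DD x - f i x \<partial>Q)"
        by (rule Bochner_Integration.integral_diff[OF fiD fi, symmetric])
      also have "\<bar>\<dots>\<bar> \<le> (\<integral>x. B1 - B1 * indicator DD x \<partial>Q)"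
      proof (rule abs_integral_le)
        show "integrable Q (\<lambda>x. f i x * indicator DD x - f i x)" using fiD fi by simp
        show "integrable Q (\<lambda>x. B1 - B1 * indicator DD x)" using indDD by simp
        fix x assume x: "x \<in> space Q"
        show "\<bar>f i x * indicator DD x - f i x\<bar> \<le> B1 - B1 * indicator DD x"
          using B1(2)[OF i x] by (cases "x \<in> DD") auto
      qed
      also have "(\<integral>x. B1 - B1 * indicator DD x \<partial>Q) = B1 - B1 * q"
        using Bochner_Integration.integral_diff[of Q "\<lambda>_. B1" "\<lambda>x. B1 * indicator DD x"] indDD intDD_const[of B1]
        by (simp add: prob_space)
      finally show ?thesis by (simp add: right_diff_distrib)
    qed
    have A3: "\<bar>S0\<bar> \<le> B1 * q"
    proof -
      have "\<bar>S0\<bar> \<le> (\<integral>x. B1 * indicator DD x \<partial>Q)" unfolding S0_def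
      proof (rule abs_integral_le[OF Sint])
        show "integrable Q (\<lambda>x. B1 * indicator DD x)" using indDD by simp
        fix x assume "x \<in> space Q"
        show "\<bar>f i (p (key x)) * indicator DD x\<bar> \<le> B1 * indicator DD x"
          using B1(2)[OF i, of "p (key x)"] pDD(1)[OF keyK] DD(2) by (cases "x \<in> DD") auto
      qed
      then show ?thesis using intDD_const[of B1] by linarith
    qed
    have A4: "\<bar>S0 / q - S0\<bar> \<le> B1 * (1 - q)"
    proof -
      have "S0 / q - S0 = S0 * (1 / q - 1)" by (simp add: field_simps)
      then have "\<bar>S0 / q - S0\<bar> = \<bar>S0\<bar> * (1 / q - 1)" using q by (simp add: abs_mult)
      also have "\<dots> \<le> (B1 * q) * (1 / q - 1)" using A3 q by (intro mult_right_mono) auto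
      also have "\<dots> = B1 * (1 - q)" using q by (simp add: field_simps)
      finally show ?thesis .
    qed
    have "B1 * (1 - q) < B1 * \<eta>" using q B1(1) by simp
    moreover have "B1 * \<eta> \<le> \<delta> / 8" using \<eta>(3) B1(1) by (simp add: field_simps)
    ultimately have "B1 * (1 - q) < \<delta> / 8" by linarith
    then show ?thesis using A1 A2 A4 ws d_def by linarith
  qed
  have est_e: "(\<Sum>k\<in>K. w k * e (p k)) < (\<integral>x. e x \<partial>Q) + \<delta>"
  proof -
    define S0 where "S0 = (\<integral>x. e (p (key x)) * indicator DD x \<partial>Q)"
    have Sint: "integrable Q (\<lambda>x. e (p (key x)) * indicator DD x)" by (rule simple_int)
    have eD: "integrable Q (\<lambda>x. e x * indicator DD x)" by (rule integrable_real_mult_indicator[OF DD(1) ei])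
    have ws: "(\<Sum>k\<in>K. w k * e (p k)) = S0 / q" unfolding S0_def by (rule wsum)
    have "S0 \<le> (\<integral>x. e x * indicator DD x + d * indicator DD x \<partial>Q)"
      unfolding S0_def
    proof (rule integral_mono[OF Sint])
      show "integrable Q (\<lambda>x. e x * indicator DD x + d * indicator DD x)" using eD indDD by simp
      fix x assume "x \<in> space Q"
      show "e (p (key x)) * indicator DD x \<le> e x * indicator DD x + d * indicator DD x"
        using close_e[of x] by (cases "x \<in> DD") auto
    qed
    also have "\<dots> = (\<integral>x. e x * indicator DD x \<partial>Q) + d * q"
      using Bochner_Integration.integral_add[OF eD, of "\<lambda>x. d * indicator DD x"] indDD intDD_const[of d] by simp
    also have "(\<integral>x. e x * indicator DD x \<partial>Q) \<le> I"
      unfolding I_def by (rule integral_mono[OF eD ei]) (use e0 in \<open>auto simp: indicator_def\<close>)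
    finally have S0le: "S0 \<le> I + d * q" by simp
    have "S0 / q \<le> (I + d * q) / q" using S0le q by (simp add: divide_right_mono)
    also have "\<dots> = I / q + d" using q by (simp add: field_simps)
    also have "I / q \<le> I * (1 + 2 * \<eta>)"
    proof -
      have "0 \<le> \<eta> * (1 - 2 * \<eta>)" using \<eta>(1,2) by (intro mult_nonneg_nonneg) auto
      moreover have "(1 + 2 * \<eta>) * (1 - \<eta>) = 1 + \<eta> * (1 - 2 * \<eta>)" by (simp add: algebra_simps)
      ultimately have "1 \<le> (1 + 2 * \<eta>) * (1 - \<eta>)" by linarith
      also have "\<dots> \<le> (1 + 2 * \<eta>) * q" using q \<eta>(1) by (intro mult_left_mono) auto
      finally have "1 \<le> (1 + 2 * \<eta>) * q" .
      then have "I \<le> I * (1 + 2 * \<eta>) * q" using I0 by (metis mult.assoc mult_le_cancel_left1 not_le order.strict_iff_not)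
      then show ?thesis using q by (simp add: divide_le_eq)
    qed
    finally have "S0 / q \<le> I + 2 * \<eta> * I + d" by (simp add: algebra_simps)
    moreover have "2 * \<eta> * I < \<delta> / 2 + \<delta> / 4"
    proof -
      have "2 * \<eta> * I \<le> 2 * (\<delta> / (4 * (I + \<delta> + 1))) * I" using \<eta>(4) I0 by (intro mult_right_mono) auto
      also have "\<dots> = (\<delta> / 2) * (I / (I + \<delta> + 1))"
      proof -
        have "I + \<delta> + 1 \<noteq> 0" using I0 \<delta> by linarith
        then show ?thesis by (simp add: field_simps)
      qed
      also have "\<dots> \<le> \<delta> / 2" using I0 \<delta> by (intro mult_left_le) auto
      finally show ?thesis using \<delta> by simp
    qed
    ultimately show ?thesis using ws d_def I_def by linarith
  qed
  show ?thesis
    by (intro exI[of _ K] exI[of _ p] exI[of _ w] conjI ballI)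
       (use Kfin pDD(1) DD(3) w0 w1 est_f est_e in auto)
qed



lemma pfun_bound:
  fixes m :: "'x::polish_space measure" and u :: "'x \<Rightarrow> 'y::polish_space"
  assumes sm: "sets m = sets borel" and fm: "finite_measure m" and phi: "\<phi> \<in> Cb" and u: "u \<in> L0 m"
    and B: "\<And>z. \<bar>\<phi> z\<bar> \<le> B"
  shows "\<bar>pfun m \<phi> u\<bar> \<le> B * measure m (space m)"
proof -
  interpret finite_measure m by fact
  have gm: "(\<lambda>x. \<phi> (x, u x)) \<in> borel_measurable m"
    using measurable_comp[OF graph_meas[OF sm u] Cb_meas[OF phi]] by (simp add: comp_def)
  have "\<bar>pfun m \<phi> u\<bar> \<le> (\<integral>x. B \<partial>m)" unfolding pfun_def
  proof (rule abs_integral_le)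
    show "integrable m (\<lambda>x. \<phi> (x, u x))"
      by (rule integrable_const_bound[where B=B]) (use gm B in auto)
  qed (use B in auto)
  then show ?thesis by (simp add: mult.commute)
qed

theorem mainTheorem10:
  fixes m :: "'x::polish_space measure"
    and E :: "('x \<Rightarrow> 'y::polish_space) \<Rightarrow> ennreal"
    and T :: "('x \<times> 'y) measure \<Rightarrow> ennreal"
  assumes "sets m = sets borel" and "finite_measure m"
    and "E \<in> borel_measurable (L0_borel m)"
    and "convex_fun_on_Mpi m T" and "lsc_narrow m T"
    and "\<And>u. u \<in> L0 m \<Longrightarrow> T (graph_measure m u) \<le> E u"
  shows "\<forall>\<mu>\<in>Mpi m. T \<mu> \<le> T_E m E \<mu>"
proof -
  note sm = assms(1) and fm = assms(2) and Em = assms(3) and conv = assms(4) and lsc = assms(5) and TE = assms(6)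
  have key: "T \<mu> \<le> (\<integral>\<^sup>+u. E u \<partial>Q)" if mu: "\<mu> \<in> Mpi m" and Q: "Q \<in> Plans m \<mu>" for \<mu> Q
  proof (rule ccontr)
    assume "\<not> ?thesis"
    then have lt: "(\<integral>\<^sup>+u. E u \<partial>Q) < T \<mu>" by simp
    then obtain z where z: "(\<integral>\<^sup>+u. E u \<partial>Q) < z" "z < T \<mu>" using dense by blast
    define c where "c = enn2real z"
    have zc: "z = ennreal c" using z(2) unfolding c_def by (cases z) (auto simp: top_unique)
    have c: "(\<integral>\<^sup>+u. E u \<partial>Q) < ennreal c" "ennreal c < T \<mu>" using z zc by auto
    obtain \<Phi> \<delta> where \<Phi>: "finite \<Phi>" "\<Phi> \<subseteq> Cb" "\<delta> > 0"
      "\<forall>\<nu>\<in>Mpi m. (\<forall>\<phi>\<in>\<Phi>. \<bar>(\<integral>z. \<phi> z \<partial>\<nu>) - (\<integral>z. \<phi> z \<partial>\<mu>)\<bar> < \<delta>) \<longrightarrow> ennreal c < T \<nu>"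
      using lsc_nbhd[OF lsc mu c(2)] by blast
    have Qp: "prob_space Q" "space Q = L0 m" "sets Q = sets (L0_borel m)"
      "\<And>\<phi>. \<phi> \<in> Cb \<Longrightarrow> (\<integral>z. \<phi> z \<partial>\<mu>) = (\<integral>u. pfun m \<phi> u \<partial>Q)"
      using Q unfolding Plans_def pfun_def by auto
    interpret prob_space Q by (rule Qp(1))
    have measQ: "g \<in> borel_measurable Q" if "g \<in> borel_measurable (L0_borel m)" for g :: "_ \<Rightarrow> 'b::topological_space"
      by (subst measurable_cong_sets[OF Qp(3) refl]) (rule that)
    have EQ[measurable]: "E \<in> borel_measurable Q" by (rule measQ[OF Em])
    define Bf where "Bf \<phi> = (SOME B. B > 0 \<and> (\<forall>z. \<bar>\<phi> z\<bar> \<le> B))" for \<phi> :: "'x \<times> 'y \<Rightarrow> real"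
    have Bf: "Bf \<phi> > 0" "\<And>z. \<bar>\<phi> z\<bar> \<le> Bf \<phi>" if "\<phi> \<in> Cb" for \<phi>
      using someI_ex[OF Cb_bound[OF that]] unfolding Bf_def by auto
    define Btot where "Btot = (\<Sum>\<phi>\<in>\<Phi>. Bf \<phi>) * measure m (space m)"
    have fb: "\<bar>pfun m \<phi> u\<bar> \<le> Btot" if "\<phi> \<in> \<Phi>" "u \<in> space Q" for \<phi> u
    proof -
      have phi: "\<phi> \<in> Cb" using that \<Phi>(2) by auto
      have "\<bar>pfun m \<phi> u\<bar> \<le> Bf \<phi> * measure m (space m)"
        using pfun_bound[OF sm fm phi _ Bf(2)[OF phi]] that Qp(2) by auto
      also have "\<dots> \<le> Btot" unfolding Btot_def
      proof (intro mult_right_mono member_le_sum)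
        show "\<And>x. x \<in> \<Phi> - {\<phi>} \<Longrightarrow> 0 \<le> Bf x" using Bf(1) \<Phi>(2) less_imp_le by blast
      qed (use \<Phi>(1) that(1) in auto)
      finally show ?thesis .
    qed
    have fmQ: "pfun m \<phi> \<in> borel_measurable Q" if "\<phi> \<in> \<Phi>" for \<phi>
      using that \<Phi>(2) by (intro measQ pfun_meas[OF sm fm]) auto
    define e where "e u = enn2real (E u)" for u
    have em: "e \<in> borel_measurable Q" unfolding e_def by measurable
    define G where "G = {u \<in> space Q. E u < \<top>}"
    have Gm: "G \<in> sets Q" unfolding G_def by measurable
    have fin: "(\<integral>\<^sup>+u. E u \<partial>Q) \<noteq> \<infinity>" using c(1) by (auto simp: top_unique)
    have AEG: "AE u in Q. u \<in> G"
      using nn_integral_PInf_AE[OF EQ fin] AE_space by eventually_elim (auto simp: G_def top.not_eq_extremum)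
    have AEe: "AE u in Q. ennreal (e u) = E u"
      using AEG by eventually_elim (auto simp: G_def e_def)
    have nnE: "(\<integral>\<^sup>+u. ennreal (e u) \<partial>Q) = (\<integral>\<^sup>+u. E u \<partial>Q)" using AEe by (rule nn_integral_cong_AE)
    have ei: "integrable Q e"
      by (rule integrableI_nonneg[OF em]) (use nnE fin in \<open>auto simp: e_def top.not_eq_extremum\<close>)
    have Ie: "(\<integral>u. e u \<partial>Q) = enn2real (\<integral>\<^sup>+u. E u \<partial>Q)"
    proof -
      have "(\<integral>u. e u \<partial>Q) = enn2real (\<integral>\<^sup>+u. ennreal (e u) \<partial>Q)"
        by (rule integral_eq_nn_integral[OF em]) (simp add: e_def)
      then show ?thesis by (simp only: nnE)
    qed
    have Iec: "(\<integral>u. e u \<partial>Q) < c"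
    proof -
      have "ennreal (\<integral>u. e u \<partial>Q) = (\<integral>\<^sup>+u. E u \<partial>Q)" using Ie fin by (simp add: top.not_eq_extremum)
      then have "ennreal (\<integral>u. e u \<partial>Q) < ennreal c" using c(1) by simp
      moreover have "0 \<le> (\<integral>u. e u \<partial>Q)" unfolding e_def by (rule integral_nonneg_AE) auto
      ultimately show ?thesis by (simp add: ennreal_less_iff)
    qed
    define \<delta>0 where "\<delta>0 = min \<delta> (c - (\<integral>u. e u \<partial>Q))"
    have \<delta>0: "\<delta>0 > 0" "\<delta>0 \<le> \<delta>" "(\<integral>u. e u \<partial>Q) + \<delta>0 \<le> c" using \<Phi>(3) Iec by (auto simp: \<delta>0_def)
    obtain K :: "((('x \<times> 'y \<Rightarrow> real) \<Rightarrow> int) \<times> int) set" and p w where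
      K: "finite K" "\<forall>k\<in>K. p k \<in> G \<and> 0 \<le> w k" "sum w K = 1"
      "\<forall>\<phi>\<in>\<Phi>. \<bar>(\<Sum>k\<in>K. w k * pfun m \<phi> (p k)) - (\<integral>u. pfun m \<phi> u \<partial>Q)\<bar> < \<delta>0"
      "(\<Sum>k\<in>K. w k * e (p k)) < (\<integral>u. e u \<partial>Q) + \<delta>0"
    proof -
      have e0: "\<And>u. u \<in> space Q \<Longrightarrow> 0 \<le> e u" by (simp add: e_def)
      show ?thesis
        using approx[where Q=Q and F=\<Phi> and f="\<lambda>\<phi> u. pfun m \<phi> u" and e=e and G=G and \<delta>=\<delta>0 and B=Btot,
          OF Qp(1) \<Phi>(1) fmQ fb em e0 ei Gm AEG \<delta>0(1)] that by blast
    qed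
    have pL0: "p k \<in> L0 m" if "k \<in> K" for k using K(2) that Qp(2) by (auto simp: G_def)
    have pfin: "E (p k) < \<top>" if "k \<in> K" for k using K(2) that by (auto simp: G_def)
    define \<nu> where "\<nu> k = graph_measure m (p k)" for k
    have \<nu>: "\<nu> k \<in> Mpi m" if "k \<in> K" for k unfolding \<nu>_def by (rule graph_in_Mpi[OF sm fm pL0[OF that]])
    obtain \<rho> where \<rho>: "\<rho> \<in> Mpi m" "T \<rho> \<le> (\<Sum>k\<in>K. ennreal (w k) * T (\<nu> k))"
      "\<And>g B. g \<in> borel_measurable borel \<Longrightarrow> (\<forall>x. \<bar>g x\<bar> \<le> B) \<Longrightarrow>
         (\<integral>x. g x \<partial>\<rho>) = (\<Sum>k\<in>K. w k * (\<integral>x. g x \<partial>\<nu> k))"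
      using combo[OF conv K(1), of \<nu> w] \<nu> K(2,3) by blast
    have "T \<rho> \<le> (\<Sum>k\<in>K. ennreal (w k) * E (p k))"
    proof (rule order_trans[OF \<rho>(2)])
      show "(\<Sum>k\<in>K. ennreal (w k) * T (\<nu> k)) \<le> (\<Sum>k\<in>K. ennreal (w k) * E (p k))"
        using TE[OF pL0] by (intro sum_mono mult_left_mono) (auto simp: \<nu>_def)
    qed
    also have "\<dots> = (\<Sum>k\<in>K. ennreal (w k * e (p k)))"
    proof (rule sum.cong)
      fix k assume k: "k \<in> K"
      have "E (p k) = ennreal (e (p k))" using pfin[OF k] by (cases "E (p k)") (auto simp: e_def)
      then show "ennreal (w k) * E (p k) = ennreal (w k * e (p k))"
        using K(2) k by (simp add: ennreal_mult e_def)
    qed simp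
    also have "\<dots> = ennreal (\<Sum>k\<in>K. w k * e (p k))"
      using K(2) by (intro sum_ennreal) (auto simp: e_def)
    also have "\<dots> < ennreal c"
    proof -
      have "(\<Sum>k\<in>K. w k * e (p k)) < c" using K(5) \<delta>0(3) by linarith
      moreover have "0 \<le> (\<integral>u. e u \<partial>Q)" unfolding e_def by (rule integral_nonneg_AE) auto
      moreover have "0 \<le> (\<Sum>k\<in>K. w k * e (p k))"
        using K(2) by (intro sum_nonneg mult_nonneg_nonneg) (auto simp: e_def)
      ultimately show ?thesis using \<delta>0 by (subst ennreal_less_iff) auto
    qed
    finally have Tlt: "T \<rho> < ennreal c" .
    have "ennreal c < T \<rho>"
    proof (rule \<Phi>(4)[rule_format, OF \<rho>(1)])
      fix \<phi> assume phi: "\<phi> \<in> \<Phi>"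
      then have phiC: "\<phi> \<in> Cb" using \<Phi>(2) by auto
      have "(\<integral>z. \<phi> z \<partial>\<rho>) = (\<Sum>k\<in>K. w k * (\<integral>z. \<phi> z \<partial>\<nu> k))"
        by (rule \<rho>(3)[OF Cb_meas[OF phiC]]) (use Bf(2)[OF phiC] in blast)
      also have "\<dots> = (\<Sum>k\<in>K. w k * pfun m \<phi> (p k))"
        by (rule sum.cong) (auto simp: \<nu>_def pfun_def graph_integral[OF sm pL0 phiC])
      finally have "(\<integral>z. \<phi> z \<partial>\<rho>) = (\<Sum>k\<in>K. w k * pfun m \<phi> (p k))" .
      moreover have "(\<integral>z. \<phi> z \<partial>\<mu>) = (\<integral>u. pfun m \<phi> u \<partial>Q)" by (rule Qp(4)[OF phiC])
      ultimately show "\<bar>(\<integral>z. \<phi> z \<partial>\<rho>) - (\<integral>z. \<phi> z \<partial>\<mu>)\<bar> < \<delta>"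
        using K(4) phi \<delta>0(2) by fastforce
    qed
    with Tlt show False by simp
  qed
  show ?thesis unfolding T_E_def by (auto intro!: INF_greatest key)
qed

end
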